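(* Let $\mathcal G$ be an undirected connected graph with $n\ge 2$ nodes and $m$ edges, with incidence matrix $D=[D_\tau\ D_c]$, spanning-tree incidence matrix $D_\tau$, matrix $R=[I_{n-1}\ T_\tau^c]$, edge-weight matrix $W\succ 0$ (diagonal) and time-scale matrix $E\succ 0$ (diagonal), all as described in the context. Then the matrix $-L_{e,s}^\tau R W R^T\in\mathbb R^{(n-1)\times(n-1)}$, where $L_{e,s}^\tau=D_\tau^T E^{-1}D_\tau$, is diagonalizable.
   Context: Let $\mathcal G$ be an undirected, connected graph without self-loops, with node set $\{1,\dots,n\}$ ($n\ge2$) and edge set $\mathcal E$, $m=|\mathcal E|$. Give each edge an arbitrary orientation; the incidence matrix $D\in\mathbb R^{n\times m}$ has $D_{il}=1$ if node $i$ is the initial node of edge $l$, $-1$ if it is the terminal node, and $0$ otherwise. Fix a spanning tree $\mathcal G_\tau$ of $\mathcal G$ and order the edges so that the first $n-1$ are the tree edges; write $D=[D_\tau\ D_c]$ with $D_\tau\in\mathbb R^{n\times(n-1)}$ (incidence matrix of the tree) and $D_c$ the incidence matrix of the remaining (co-tree) edges. Set $T_\tau^c=(D_\tau^TD_\tau)^{-1}D_\tau^TD_c$ and $R=[I_{n-1}\ T_\tau^c]\in\mathbb R^{(n-1)\times m}$ (so $D=D_\tau R$). Let $W=\mathrm{diag}(w_1,\dots,w_m)$ with all $w_l>0$ (edge weights) and $E=\mathrm{diag}(\epsilon_1,\dots,\epsilon_n)$ with all $\epsilon_i>0$ (node time scales). The time-scaled edge Laplacian of the tree is $L_{e,s}^\tau=D_\tau^TE^{-1}D_\tau$.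 *)

theory Defs
  imports "Jordan_Normal_Form.Matrix"
begin

text \<open>Nodes are 0,...,n-1; edges are indexed 0,...,m-1, edge l oriented as the
  pair (initial node, terminal node) = e l.  The first n-1 edges are the
  tree edges.\<close>

definition incidence_mat :: "nat \<Rightarrow> nat \<Rightarrow> (nat \<Rightarrow> nat \<times> nat) \<Rightarrow> real mat" where
  "incidence_mat n m e = mat n m (\<lambda>(i,l).
      if fst (e l) = i then 1 else if snd (e l) = i then -1 else 0)"

definition connected_on :: "nat \<Rightarrow> (nat \<times> nat) set \<Rightarrow> bool" where
  "connected_on n es \<longleftrightarrow> (\<forall>i<n. \<forall>j<n. (i, j) \<in> (es \<union> es\<inverse>)\<^sup>*)"

definition spanning_tree :: "nat \<Rightarrow> (nat \<times> nat) set \<Rightarrow> (nat \<times> nat) set \<Rightarrow> bool" where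
  "spanning_tree n es T \<longleftrightarrow> T \<subseteq> es \<and> connected_on n T \<and>
      card ((\<lambda>(a,b). {a,b}) ` T) = n - 1"

definition inv_mat :: "nat \<Rightarrow> real mat \<Rightarrow> real mat" where
  "inv_mat k M = (SOME Q. Q \<in> carrier_mat k k \<and> M * Q = 1\<^sub>m k \<and> Q * M = 1\<^sub>m k)"

definition diag_of :: "nat \<Rightarrow> (nat \<Rightarrow> real) \<Rightarrow> real mat" where
  "diag_of k d = mat k k (\<lambda>(i,j). if i = j then d i else 0)"

definition D_tau :: "nat \<Rightarrow> (nat \<Rightarrow> nat \<times> nat) \<Rightarrow> real mat" where
  "D_tau n e = incidence_mat n (n - 1) e"

definition D_c :: "nat \<Rightarrow> nat \<Rightarrow> (nat \<Rightarrow> nat \<times> nat) \<Rightarrow> real mat" where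
  "D_c n m e = incidence_mat n (m - (n - 1)) (\<lambda>l. e (l + (n - 1)))"

definition T_tau_c :: "nat \<Rightarrow> nat \<Rightarrow> (nat \<Rightarrow> nat \<times> nat) \<Rightarrow> real mat" where
  "T_tau_c n m e = inv_mat (n - 1) (transpose_mat (D_tau n e) * D_tau n e)
                     * transpose_mat (D_tau n e) * D_c n m e"

definition R_mat :: "nat \<Rightarrow> nat \<Rightarrow> (nat \<Rightarrow> nat \<times> nat) \<Rightarrow> real mat" where
  "R_mat n m e = mat (n - 1) m (\<lambda>(i,l).
      if l < n - 1 then (if i = l then 1 else 0) else T_tau_c n m e $$ (i, l - (n - 1)))"

definition L_es_tau :: "nat \<Rightarrow> (nat \<Rightarrow> nat \<times> nat) \<Rightarrow> (nat \<Rightarrow> real) \<Rightarrow> real mat" where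
  "L_es_tau n e eps = transpose_mat (D_tau n e) * inv_mat n (diag_of n eps) * D_tau n e"

definition diagonalizable_mat :: "real mat \<Rightarrow> bool" where
  "diagonalizable_mat A \<longleftrightarrow> (\<exists>B. diagonal_mat B \<and> similar_mat A B)"

end

theory Submission
  imports Defs "Jordan_Normal_Form.Jordan_Normal_Form_Uniqueness" "Jordan_Normal_Form.Jordan_Normal_Form_Existence"
begin


lemma self_adj:
  fixes A M :: "real mat"
  assumes A: "A \<in> carrier_mat k k" and M: "M \<in> carrier_mat k k"
    and Ms: "transpose_mat M = M" and MA: "transpose_mat (M * A) = M * A"
    and x: "x \<in> carrier_vec k" and y: "y \<in> carrier_vec k"
  shows "x \<bullet> (M *\<^sub>v (A *\<^sub>v y)) = (A *\<^sub>v x) \<bullet> (M *\<^sub>v y)"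
proof -
  have MAc: "M * A \<in> carrier_mat k k" using A M by auto
  have "x \<bullet> (M *\<^sub>v (A *\<^sub>v y)) = x \<bullet> ((M * A) *\<^sub>v y)"
    using A M y by (simp add: assoc_mult_mat_vec)
  also have "\<dots> = (transpose_mat (M * A) *\<^sub>v x) \<bullet> y"
    using transpose_vec_mult_scalar[OF MAc y x] by simp
  also have "\<dots> = y \<bullet> ((M * A) *\<^sub>v x)" unfolding MA
    by (rule comm_scalar_prod[of _ k], insert MAc x y, auto)
  also have "\<dots> = y \<bullet> (M *\<^sub>v (A *\<^sub>v x))"
    using A M x by (simp add: assoc_mult_mat_vec)
  also have "\<dots> = (transpose_mat M *\<^sub>v y) \<bullet> (A *\<^sub>v x)"
    using transpose_vec_mult_scalar[OF M _ y, of "A *\<^sub>v x"] A x by simp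
  also have "\<dots> = (A *\<^sub>v x) \<bullet> (M *\<^sub>v y)" unfolding Ms
    by (rule comm_scalar_prod[of _ k], insert A M x y, auto)
  finally show ?thesis .
qed

lemma transpose_smult_mat: "transpose_mat (c \<cdot>\<^sub>m A) = c \<cdot>\<^sub>m transpose_mat A"
  by (rule eq_matI, auto)

lemma sym_char:
  fixes A M :: "real mat"
  assumes A: "A \<in> carrier_mat k k" and M: "M \<in> carrier_mat k k"
    and Ms: "transpose_mat M = M" and MA: "transpose_mat (M * A) = M * A"
  shows "transpose_mat (M * char_matrix A ev) = M * char_matrix A ev"
proof -
  have "M * char_matrix A ev = M * A + (-ev) \<cdot>\<^sub>m M"
    unfolding char_matrix_def using A M
    by (simp add: mult_add_distrib_mat[of M k k A k] mult_smult_distrib[of M k k _ k])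
  moreover have "transpose_mat (M * A + (-ev) \<cdot>\<^sub>m M) = M * A + (-ev) \<cdot>\<^sub>m M"
    using A M Ms MA by (simp add: transpose_add[of _ k k] transpose_smult_mat)
  ultimately show ?thesis by simp
qed

lemma mult_zero_vec[simp]: "M \<in> carrier_mat r k \<Longrightarrow> M *\<^sub>v 0\<^sub>v k = (0\<^sub>v r :: 'a::comm_ring_1 vec)"
  by (intro eq_vecI, auto simp: scalar_prod_def)

lemma ker2:
  fixes B M :: "real mat"
  assumes B: "B \<in> carrier_mat k k" and M: "M \<in> carrier_mat k k"
    and Ms: "transpose_mat M = M" and MB: "transpose_mat (M * B) = M * B"
    and pd: "\<And>x. x \<in> carrier_vec k \<Longrightarrow> x \<noteq> 0\<^sub>v k \<Longrightarrow> x \<bullet> (M *\<^sub>v x) > 0"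
  shows "mat_kernel (B ^\<^sub>m 2) = mat_kernel (B ^\<^sub>m 1)"
proof -
  have B1: "B ^\<^sub>m 1 = B" using B by (simp add: numeral_2_eq_2)
  have B2: "B ^\<^sub>m 2 = B * B" using B by (simp add: numeral_2_eq_2)
  have BB: "B * B \<in> carrier_mat k k" using B by auto
  show ?thesis unfolding B1 B2 mat_kernel[OF B] mat_kernel[OF BB]
  proof (intro Collect_cong conj_cong refl iffI)
    fix v assume v: "v \<in> carrier_vec k" and z: "B * B *\<^sub>v v = 0\<^sub>v k"
    have Bv: "B *\<^sub>v v \<in> carrier_vec k" using B v by auto
    have "(B *\<^sub>v v) \<bullet> (M *\<^sub>v (B *\<^sub>v v)) = v \<bullet> (M *\<^sub>v (B *\<^sub>v (B *\<^sub>v v)))"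
      using self_adj[OF B M Ms MB v Bv] by simp
    also have "B *\<^sub>v (B *\<^sub>v v) = 0\<^sub>v k" using z B v by (simp add: assoc_mult_mat_vec)
    also have "M *\<^sub>v 0\<^sub>v k = 0\<^sub>v k" using M by simp
    also have "v \<bullet> 0\<^sub>v k = 0" using v by simp
    finally show "B *\<^sub>v v = 0\<^sub>v k" using pd[OF Bv] by force
  next
    fix v assume v: "v \<in> carrier_vec k" and z: "B *\<^sub>v v = 0\<^sub>v k"
    show "B * B *\<^sub>v v = 0\<^sub>v k" using z B v by (simp add: assoc_mult_mat_vec)
  qed
qed

lemma re_part:
  fixes A :: "real mat" and v :: "complex vec"
  assumes A: "A \<in> carrier_mat k k" and v: "v \<in> carrier_vec k"
    and ev: "map_mat complex_of_real A *\<^sub>v v = a \<cdot>\<^sub>v v"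
  shows "A *\<^sub>v map_vec Re v = Re a \<cdot>\<^sub>v map_vec Re v + (- Im a) \<cdot>\<^sub>v map_vec Im v"
    and "A *\<^sub>v map_vec Im v = Im a \<cdot>\<^sub>v map_vec Re v + Re a \<cdot>\<^sub>v map_vec Im v"
proof -
  have e: "(\<Sum>j<k. complex_of_real (A $$ (i,j)) * v $ j) = a * v $ i" if i: "i < k" for i
  proof -
    have "(map_mat complex_of_real A *\<^sub>v v) $ i = (a \<cdot>\<^sub>v v) $ i" using ev by simp
    thus ?thesis using i A v by (simp add: scalar_prod_def lessThan_atLeast0)
  qed
  show "A *\<^sub>v map_vec Re v = Re a \<cdot>\<^sub>v map_vec Re v + (- Im a) \<cdot>\<^sub>v map_vec Im v"
  proof (rule eq_vecI)
    fix i assume "i < dim_vec (Re a \<cdot>\<^sub>v map_vec Re v + (- Im a) \<cdot>\<^sub>v map_vec Im v)"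
    hence i: "i < k" using v by simp
    from arg_cong[OF e[OF i], of Re]
    show "(A *\<^sub>v map_vec Re v) $ i = (Re a \<cdot>\<^sub>v map_vec Re v + (- Im a) \<cdot>\<^sub>v map_vec Im v) $ i"
      using i A v by (simp add: scalar_prod_def lessThan_atLeast0 Re_sum)
  qed (insert A v, auto)
  show "A *\<^sub>v map_vec Im v = Im a \<cdot>\<^sub>v map_vec Re v + Re a \<cdot>\<^sub>v map_vec Im v"
  proof (rule eq_vecI)
    fix i assume "i < dim_vec (Im a \<cdot>\<^sub>v map_vec Re v + Re a \<cdot>\<^sub>v map_vec Im v)"
    hence i: "i < k" using v by simp
    from arg_cong[OF e[OF i], of Im]
    show "(A *\<^sub>v map_vec Im v) $ i = (Im a \<cdot>\<^sub>v map_vec Re v + Re a \<cdot>\<^sub>v map_vec Im v) $ i"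
      using i A v by (simp add: scalar_prod_def lessThan_atLeast0 Im_sum)
  qed (insert A v, auto)
qed

lemma real_ev:
  fixes A M :: "real mat" and v :: "complex vec"
  assumes A: "A \<in> carrier_mat k k" and M: "M \<in> carrier_mat k k"
    and Ms: "transpose_mat M = M" and MA: "transpose_mat (M * A) = M * A"
    and pd: "\<And>x. x \<in> carrier_vec k \<Longrightarrow> x \<noteq> 0\<^sub>v k \<Longrightarrow> x \<bullet> (M *\<^sub>v x) > 0"
    and v: "v \<in> carrier_vec k" and v0: "v \<noteq> 0\<^sub>v k"
    and ev: "map_mat complex_of_real A *\<^sub>v v = a \<cdot>\<^sub>v v"
  shows "Im a = 0"
proof -
  define x where "x = map_vec Re v"
  define y where "y = map_vec Im v"
  have x: "x \<in> carrier_vec k" and y: "y \<in> carrier_vec k" using v by (auto simp: x_def y_def)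
  note Ax = re_part(1)[OF A v ev, folded x_def y_def]
  note Ay = re_part(2)[OF A v ev, folded x_def y_def]
  define p where "p = x \<bullet> (M *\<^sub>v x)"
  define q where "q = y \<bullet> (M *\<^sub>v y)"
  define r where "r = x \<bullet> (M *\<^sub>v y)"
  have Mx: "M *\<^sub>v x \<in> carrier_vec k" and My: "M *\<^sub>v y \<in> carrier_vec k" using M x y by auto
  have yx: "y \<bullet> (M *\<^sub>v x) = r"
  proof -
    have "y \<bullet> (M *\<^sub>v x) = (transpose_mat M *\<^sub>v y) \<bullet> x"
      using transpose_vec_mult_scalar[OF M x y] by simp
    also have "\<dots> = x \<bullet> (M *\<^sub>v y)" unfolding Ms by (rule comm_scalar_prod[of _ k], insert My x, auto)
    finally show ?thesis unfolding r_def .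
  qed
  have "x \<bullet> (M *\<^sub>v (A *\<^sub>v y)) = (A *\<^sub>v x) \<bullet> (M *\<^sub>v y)"
    by (rule self_adj[OF A M Ms MA x y])
  also have "x \<bullet> (M *\<^sub>v (A *\<^sub>v y)) = Im a * p + Re a * r"
    unfolding Ay p_def r_def using M x y Mx My
    by (simp add: mult_add_distrib_mat_vec[of M k k] mult_mat_vec scalar_prod_add_distrib[of _ k])
  also have "(A *\<^sub>v x) \<bullet> (M *\<^sub>v y) = Re a * r - Im a * q"
    unfolding Ax q_def r_def using M x y Mx My yx[unfolded r_def]
    by (simp add: add_scalar_prod_distrib[of _ k])
  finally have eq: "Im a * (p + q) = 0" by (simp add: algebra_simps)
  have psd: "z \<bullet> (M *\<^sub>v z) \<ge> 0" if z: "z \<in> carrier_vec k" for z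
  proof (cases "z = 0\<^sub>v k")
    case True thus ?thesis using M by simp
  next
    case False thus ?thesis using pd[OF z] by simp
  qed
  have p: "p \<ge> 0" and q: "q \<ge> 0" unfolding p_def q_def using psd x y by auto
  have "x \<noteq> 0\<^sub>v k \<or> y \<noteq> 0\<^sub>v k"
  proof (rule ccontr)
    assume "\<not> ?thesis"
    hence "x = 0\<^sub>v k" "y = 0\<^sub>v k" by auto
    hence xy: "map_vec Re v = 0\<^sub>v k" "map_vec Im v = 0\<^sub>v k" unfolding x_def y_def by auto
    have "v = 0\<^sub>v k"
    proof (rule eq_vecI)
      fix i assume "i < dim_vec (0\<^sub>v k :: complex vec)"
      hence i: "i < k" by simp
      from arg_cong[OF xy(1), of "\<lambda>u. u $ i"] arg_cong[OF xy(2), of "\<lambda>u. u $ i"]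
      show "v $ i = 0\<^sub>v k $ i" using i v by (simp add: complex_eq_iff)
    qed (insert v, auto)
    with v0 show False by simp
  qed
  hence "p + q > 0" using pd[OF x] pd[OF y] p q unfolding p_def q_def by auto
  with eq show ?thesis by simp
qed

interpretation of_real_poly_hom: map_poly_inj_idom_hom "of_real :: real \<Rightarrow> complex" ..

lemma map_poly_of_real_linear_prod:
  "map_poly (of_real :: real \<Rightarrow> complex) (\<Prod>a\<leftarrow>xs. [:- a, 1:]) = (\<Prod>a\<leftarrow>xs. [:- of_real a, 1:])"
proof (induct xs)
  case (Cons x xs)
  have "map_poly (of_real :: real \<Rightarrow> complex) (\<Prod>a\<leftarrow>x # xs. [:- a, 1:])
     = map_poly of_real [:- x, 1:] * map_poly of_real (\<Prod>a\<leftarrow>xs. [:- a, 1:])"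
    by (simp only: list.map prod_list.Cons of_real_poly_hom.hom_mult)
  also have "map_poly (of_real :: real \<Rightarrow> complex) [:- x, 1:] = [:- of_real x, 1:]" by simp
  finally show ?case using Cons by simp
qed simp

lemma real_split:
  fixes A M :: "real mat"
  assumes A: "A \<in> carrier_mat k k" and M: "M \<in> carrier_mat k k"
    and Ms: "transpose_mat M = M" and MA: "transpose_mat (M * A) = M * A"
    and pd: "\<And>x. x \<in> carrier_vec k \<Longrightarrow> x \<noteq> 0\<^sub>v k \<Longrightarrow> x \<bullet> (M *\<^sub>v x) > 0"
  shows "\<exists>es. char_poly A = (\<Prod>a\<leftarrow>es. [:- a, 1:])"
proof -
  define Ac where "Ac = map_mat complex_of_real A"
  have Ac: "Ac \<in> carrier_mat k k" using A unfolding Ac_def by auto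
  obtain as where as: "char_poly Ac = (\<Prod>a\<leftarrow>as. [:- a, 1:])"
    using char_poly_factorized[OF Ac] by blast
  have cp: "char_poly Ac = map_poly of_real (char_poly A)"
    unfolding Ac_def using of_real_hom.char_poly_hom[OF A] by simp
  have real: "of_real (Re a) = a" if a: "a \<in> set as" for a
  proof -
    have "poly (char_poly Ac) a = 0" unfolding as using a by (rule linear_poly_root)
    hence "eigenvalue Ac a" using eigenvalue_root_char_poly[OF Ac] by simp
    then obtain v where "eigenvector Ac v a" unfolding eigenvalue_def by blast
    hence v: "v \<in> carrier_vec k" "v \<noteq> 0\<^sub>v k" "Ac *\<^sub>v v = a \<cdot>\<^sub>v v"
      unfolding eigenvector_def using Ac by auto
    have "Im a = 0" by (rule real_ev[OF A M Ms MA pd v(1,2) v(3)[unfolded Ac_def]])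
    thus ?thesis by (simp add: complex_eq_iff)
  qed
  have "map_poly (of_real :: real \<Rightarrow> complex) (\<Prod>a\<leftarrow>map Re as. [:- a, 1:]) = (\<Prod>a\<leftarrow>map Re as. [:- of_real a, 1:])"
    by (rule map_poly_of_real_linear_prod)
  also have "\<dots> = (\<Prod>a\<leftarrow>as. [:- a, 1:])"
    using real by (induct as, auto)
  finally have "map_poly (of_real :: real \<Rightarrow> complex) (char_poly A) = map_poly of_real (\<Prod>a\<leftarrow>map Re as. [:- a, 1:])"
    using cp as by simp
  hence "char_poly A = (\<Prod>a\<leftarrow>map Re as. [:- a, 1:])" by simp
  thus ?thesis by blast
qed

lemma sum_list_strict_mono_nat:
  fixes f g :: "'b \<Rightarrow> nat"
  assumes "\<And>x. x \<in> set xs \<Longrightarrow> f x \<le> g x" and "y \<in> set xs" and "f y < g y"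
  shows "sum_list (map f xs) < sum_list (map g xs)"
  using assms
proof (induct xs)
  case (Cons x xs)
  have le: "sum_list (map f xs) \<le> sum_list (map g xs)"
    by (rule sum_list_mono, insert Cons(2), auto)
  show ?case
  proof (cases "y = x")
    case True
    with Cons have "f x < g x" by simp
    with le show ?thesis by simp
  next
    case False
    with Cons have "sum_list (map f xs) < sum_list (map g xs)" by auto
    moreover have "f x \<le> g x" using Cons(2) by simp
    ultimately show ?thesis by simp
  qed
qed simp

lemma jordan_matrix_diag:
  assumes "\<And>n a. (n, a) \<in> set n_as \<Longrightarrow> n = 1"
  shows "diagonal_mat (jordan_matrix (n_as :: (nat \<times> 'a :: {zero,one}) list))"
  using assms
proof (induct n_as)
  case Nil
  show ?case unfolding jordan_matrix_def diagonal_mat_def by simp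
next
  case (Cons na n_as)
  obtain n a where na: "na = (n, a)" by (cases na)
  have n: "n = 1" using Cons(2) na by auto
  have IH: "diagonal_mat (jordan_matrix n_as)" using Cons by auto
  show ?case unfolding na jordan_matrix_Cons n diagonal_mat_def
  proof (intro allI impI)
    fix i j
    let ?s = "sum_list (map fst n_as)"
    assume i: "i < dim_row (four_block_mat (jordan_block 1 a) (0\<^sub>m 1 ?s) (0\<^sub>m ?s 1) (jordan_matrix n_as))"
      and j: "j < dim_col (four_block_mat (jordan_block 1 a) (0\<^sub>m 1 ?s) (0\<^sub>m ?s 1) (jordan_matrix n_as))"
      and ij: "i \<noteq> j"
    from i j have i': "i < 1 + ?s" and j': "j < 1 + ?s" by auto
    show "four_block_mat (jordan_block 1 a) (0\<^sub>m 1 ?s) (0\<^sub>m ?s 1) (jordan_matrix n_as) $$ (i, j) = 0"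
      using i' j' ij IH unfolding diagonal_mat_def by auto
  qed
qed

lemma diag_general:
  fixes A M :: "real mat"
  assumes A: "A \<in> carrier_mat k k" and M: "M \<in> carrier_mat k k"
    and Ms: "transpose_mat M = M" and MA: "transpose_mat (M * A) = M * A"
    and pd: "\<And>x. x \<in> carrier_vec k \<Longrightarrow> x \<noteq> 0\<^sub>v k \<Longrightarrow> x \<bullet> (M *\<^sub>v x) > 0"
  shows "\<exists>B. diagonal_mat B \<and> similar_mat A B"
proof -
  obtain es where es: "char_poly A = (\<Prod>a\<leftarrow>es. [:- a, 1:])"
    using real_split[OF A M Ms MA pd] by blast
  obtain n_as where jnf: "jordan_nf A n_as" using jordan_nf_exists[OF A es] by blast
  have dg: "dim_gen_eigenspace A ev 2 = dim_gen_eigenspace A ev 1" for ev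
  proof -
    have B: "char_matrix A ev \<in> carrier_mat k k" using A by simp
    have ker: "mat_kernel (char_matrix A ev ^\<^sub>m 2) = mat_kernel (char_matrix A ev ^\<^sub>m 1)"
      by (rule ker2[OF B M Ms sym_char[OF A M Ms MA] pd])
    show ?thesis unfolding dim_gen_eigenspace_def kernel_dim_def ker using B by simp
  qed
  have one: "n = 1" if na: "(n, a) \<in> set n_as" for n a
  proof (rule ccontr)
    assume n1: "n \<noteq> 1"
    have n0: "n \<noteq> 0" using jnf na unfolding jordan_nf_def by force
    define xs where "xs = map fst [(n, e)\<leftarrow>n_as . e = a]"
    have nxs: "n \<in> set xs" unfolding xs_def using na by force
    have pos: "x \<noteq> 0" if "x \<in> set xs" for x
      using that jnf unfolding xs_def jordan_nf_def by force
    have "sum_list (map (min 1) xs) < sum_list (map (min 2) xs)"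
      by (rule sum_list_strict_mono_nat[OF _ nxs], insert n0 n1, auto)
    moreover have "sum_list (map (min 2) xs) = sum_list (map (min 1) xs)"
      using dg[of a] unfolding dim_gen_eigenspace[OF jnf] xs_def by simp
    ultimately show False by simp
  qed
  have "diagonal_mat (jordan_matrix n_as)" by (rule jordan_matrix_diag, rule one)
  moreover have "similar_mat A (jordan_matrix n_as)" using jnf unfolding jordan_nf_def by simp
  ultimately show ?thesis by blast
qed


lemma diag_of_carrier[simp]: "diag_of k d \<in> carrier_mat k k"
  unfolding diag_of_def by simp

lemma diag_of_mult: "diag_of k d * diag_of k d' = diag_of k (\<lambda>i. d i * d' i)"
proof (rule eq_matI)
  fix i j assume i: "i < dim_row (diag_of k (\<lambda>i. d i * d' i))" and j: "j < dim_col (diag_of k (\<lambda>i. d i * d' i))"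
  hence i: "i < k" and j: "j < k" unfolding diag_of_def by auto
  have "(diag_of k d * diag_of k d') $$ (i, j) = (\<Sum>l\<in>{0..<k}. (if i = l then d i else 0) * (if l = j then d' l else 0))"
    using i j unfolding diag_of_def by (simp add: scalar_prod_def)
  also have "\<dots> = (\<Sum>l\<in>{0..<k}. if l = i then (if i = j then d i * d' i else 0) else 0)"
    by (rule sum.cong, auto)
  also have "\<dots> = diag_of k (\<lambda>i. d i * d' i) $$ (i, j)" using i j unfolding diag_of_def by simp
  finally show "(diag_of k d * diag_of k d') $$ (i, j) = diag_of k (\<lambda>i. d i * d' i) $$ (i, j)" .
qed (auto simp: diag_of_def)

lemma diag_of_one: "(\<And>i. i < k \<Longrightarrow> d i = 1) \<Longrightarrow> diag_of k d = 1\<^sub>m k"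
  unfolding diag_of_def by (rule eq_matI, auto)

lemma inv_mat_diag:
  assumes d: "\<And>i. i < k \<Longrightarrow> d i \<noteq> 0"
  shows "inv_mat k (diag_of k d) = diag_of k (\<lambda>i. 1 / d i)"
proof -
  let ?D = "diag_of k d" let ?E = "diag_of k (\<lambda>i. 1 / d i)"
  have DE: "?D * ?E = 1\<^sub>m k" unfolding diag_of_mult by (rule diag_of_one, insert d, auto)
  have ED: "?E * ?D = 1\<^sub>m k" unfolding diag_of_mult by (rule diag_of_one, insert d, auto)
  let ?P = "\<lambda>Q. Q \<in> carrier_mat k k \<and> ?D * Q = 1\<^sub>m k \<and> Q * ?D = 1\<^sub>m k"
  have "?P ?E" using DE ED by simp
  hence P: "?P (inv_mat k ?D)" unfolding inv_mat_def by (rule someI)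
  hence Q: "inv_mat k ?D \<in> carrier_mat k k" by simp
  have "inv_mat k ?D = inv_mat k ?D * (?D * ?E)" using DE Q by simp
  also have "\<dots> = (inv_mat k ?D * ?D) * ?E" using Q by (simp add: assoc_mult_mat[of _ k k _ k _ k])
  also have "\<dots> = ?E" using P left_mult_one_mat[of ?E k k] by simp
  finally show ?thesis .
qed

lemma transpose_diag_of[simp]: "transpose_mat (diag_of k d) = diag_of k d"
  unfolding diag_of_def by (rule eq_matI, auto)

lemma sym3:
  fixes A S :: "real mat"
  assumes A: "A \<in> carrier_mat a b" and S: "S \<in> carrier_mat b b" and Ss: "transpose_mat S = S"
  shows "transpose_mat (A * S * transpose_mat A) = A * S * transpose_mat A"
proof -
  have "transpose_mat (A * S * transpose_mat A) = transpose_mat (transpose_mat A) * transpose_mat (A * S)"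
    by (rule transpose_mult[of _ a b], insert A S, auto)
  also have "transpose_mat (A * S) = transpose_mat S * transpose_mat A"
    by (rule transpose_mult[of _ a b], insert A S, auto)
  finally show ?thesis using A S Ss by simp
qed

lemma sym_prod:
  fixes L M :: "real mat"
  assumes L: "L \<in> carrier_mat k k" and M: "M \<in> carrier_mat k k"
    and Ls: "transpose_mat L = L" and Ms: "transpose_mat M = M"
  shows "transpose_mat (M * (- (L * M))) = M * (- (L * M))"
proof -
  have "M * (- (L * M)) = - (M * L * M)" using L M by simp
  moreover have "transpose_mat (M * L * M) = M * L * M"
    using sym3[OF M L Ls] Ms by simp
  ultimately show ?thesis by (simp add: transpose_uminus)
qed

theorem proposition1:
  fixes n m :: nat and e :: "nat \<Rightarrow> nat \<times> nat"
    and w :: "nat \<Rightarrow> real" and eps :: "nat \<Rightarrow> real"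
  assumes "n \<ge> 2"
    and "\<forall>l<m. fst (e l) < n \<and> snd (e l) < n \<and> fst (e l) \<noteq> snd (e l)"
    and "inj_on (\<lambda>l. {fst (e l), snd (e l)}) {..<m}"
    and "connected_on n (e ` {..<m})"
    and "n - 1 \<le> m"
    and "spanning_tree n (e ` {..<m}) (e ` {..<n - 1})"
    and "\<forall>l<m. w l > 0"
    and "\<forall>i<n. eps i > 0"
  shows "diagonalizable_mat
           (- (L_es_tau n e eps * R_mat n m e * diag_of m w * transpose_mat (R_mat n m e)))"
proof -
  define k where "k = n - 1"
  have km: "k \<le> m" using assms(5) unfolding k_def .
  define Dt where "Dt = D_tau n e"
  define R where "R = R_mat n m e"
  define W where "W = diag_of m w"
  define Einv where "Einv = diag_of n (\<lambda>i. 1 / eps i)"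
  have Dt: "Dt \<in> carrier_mat n k" unfolding Dt_def D_tau_def incidence_mat_def k_def by simp
  have R: "R \<in> carrier_mat k m" unfolding R_def R_mat_def k_def by simp
  have W: "W \<in> carrier_mat m m" unfolding W_def by simp
  have Einv: "Einv \<in> carrier_mat n n" unfolding Einv_def by simp
  have Linv: "inv_mat n (diag_of n eps) = Einv" unfolding Einv_def
    by (rule inv_mat_diag, insert assms(8), force)
  define L where "L = transpose_mat Dt * Einv * Dt"
  have Ldef: "L_es_tau n e eps = L" unfolding L_def L_es_tau_def Linv Dt_def ..
  have L: "L \<in> carrier_mat k k" unfolding L_def using Dt Einv by auto
  have Ls: "transpose_mat L = L" unfolding L_def
    using sym3[of "transpose_mat Dt" k n Einv] Dt Einv Einv_def by simp
  define M where "M = R * W * transpose_mat R"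
  have M: "M \<in> carrier_mat k k" unfolding M_def using R W by auto
  have Ms: "transpose_mat M = M" unfolding M_def W_def using sym3[OF R W[unfolded W_def]] by simp
  have G: "L_es_tau n e eps * R_mat n m e * diag_of m w * transpose_mat (R_mat n m e) = L * M"
  proof -
    have RW: "R * W \<in> carrier_mat k m" using R W by simp
    have RT: "transpose_mat R \<in> carrier_mat m k" using R by simp
    show ?thesis unfolding Ldef R_def[symmetric] W_def[symmetric] M_def
      using assoc_mult_mat[OF L RW RT] assoc_mult_mat[OF L R W] by simp
  qed
  have pd: "x \<bullet> (M *\<^sub>v x) > 0" if x: "x \<in> carrier_vec k" and x0: "x \<noteq> 0\<^sub>v k" for x
  proof -
    define u where "u = transpose_mat R *\<^sub>v x"
    have u: "u \<in> carrier_vec m" unfolding u_def using R x by auto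
    have "x \<bullet> (M *\<^sub>v x) = x \<bullet> (R *\<^sub>v (W *\<^sub>v u))"
    proof -
      have WR: "W * transpose_mat R \<in> carrier_mat m k" using R W by simp
      have RT: "transpose_mat R \<in> carrier_mat m k" using R by simp
      show ?thesis unfolding M_def u_def using R W x
        assoc_mult_mat_vec[OF R WR x] assoc_mult_mat_vec[OF W RT x] by simp
    qed
    also have "\<dots> = u \<bullet> (W *\<^sub>v u)"
    proof -
      have Wu: "W *\<^sub>v u \<in> carrier_vec m" using W u by simp
      show ?thesis using transpose_vec_mult_scalar[OF R Wu x] unfolding u_def by simp
    qed
    also have "\<dots> = (\<Sum>l\<in>{0..<m}. w l * (u $ l)^2)"
    proof -
      have Wu: "(W *\<^sub>v u) $ l = w l * u $ l" if l: "l < m" for l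
      proof -
        have "(W *\<^sub>v u) $ l = (\<Sum>j\<in>{0..<m}. (if l = j then w l else 0) * u $ j)"
          using l u unfolding W_def diag_of_def by (simp add: scalar_prod_def)
        also have "\<dots> = (\<Sum>j\<in>{0..<m}. if j = l then w l * u $ l else 0)" by (rule sum.cong, auto)
        finally show ?thesis using l by simp
      qed
      have dW: "dim_vec (W *\<^sub>v u) = m" using W by simp
      show ?thesis unfolding scalar_prod_def dW
        by (rule sum.cong, simp, subst Wu, auto simp: power2_eq_square)
    qed
    also have "\<dots> > 0"
    proof -
      obtain i where i: "i < k" and xi: "x $ i \<noteq> 0"
      proof (rule ccontr)
        assume "\<not> thesis"
        hence "\<forall>i<k. x $ i = 0" using that by blast
        hence "x = 0\<^sub>v k" using x by (intro eq_vecI, auto)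
        with x0 show False by simp
      qed
      have ui: "u $ i = x $ i"
      proof -
        have "u $ i = (\<Sum>j\<in>{0..<k}. R $$ (j, i) * x $ j)"
          unfolding u_def using i km R x by (simp add: scalar_prod_def)
        also have "\<dots> = (\<Sum>j\<in>{0..<k}. if j = i then x $ i else 0)"
          by (rule sum.cong, insert i km, auto simp: R_def R_mat_def k_def)
        finally show ?thesis using i by simp
      qed
      show ?thesis
        by (rule sum_pos2[of _ i], insert i km xi ui assms(7), auto)
    qed
    finally show ?thesis .
  qed
  have MA: "transpose_mat (M * (- (L * M))) = M * (- (L * M))" by (rule sym_prod[OF L M Ls Ms])
  have GA: "- (L * M) \<in> carrier_mat k k" using L M by auto
  show ?thesis unfolding diagonalizable_mat_def G
    by (rule diag_general[OF GA M Ms MA pd])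
qed

end
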